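(* Consider the binary model. (a) For every $n\ge2$ and all $\mathbf{x},\mathbf{y},\mathbf{v}\in\mathbb{R}^{2n-1}$, \[ \|[F'(\mathbf{x})-F'(\mathbf{y})]\mathbf{v}\|_\infty\le (n-1)\|\mathbf{x}-\mathbf{y}\|_\infty\|\mathbf{v}\|_\infty,\qquad \max_{i=1,\dots,2n-1}\|F_i'(\mathbf{x})-F_i'(\mathbf{y})\|_\infty\le \frac{n-1}{2}\|\mathbf{x}-\mathbf{y}\|_\infty . \] (b) There are absolute constants $c_{11},c_{12}>0$ such that the following holds: let $\boldsymbol\theta^*=\boldsymbol\theta^*_n\in\mathbb{R}^{2n-1}$ satisfy $e^{2\|\boldsymbol\theta^*\|_\infty}=o(n)$. Then for all sufficiently large $n$, whenever the realized degrees satisfy \[ \max\Bigl\{\max_{1\le i\le n}|d_i-\mathbb{E}_{\boldsymbol\theta^*}d_i|,\ \max_{1\le j\le n}|b_j-\mathbb{E}_{\boldsymbol\theta^*}b_j|\Bigr\}\le\sqrt{(n-1)\log(n-1)}, \] one has \[ r:=\bigl\|[F'(\boldsymbol\theta^* )]^{-1}F(\boldsymbol\theta^* )\bigr\|_\infty\le \frac{(\log n)^{1/2}}{n^{1/2}}\Bigl(c_{11}e^{6\|\boldsymbol\theta^*\|_\infty}+c_{12}e^{2\|\boldsymbol\theta^*\|_\infty}\Bigr). \]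
   Context: Binary model: Let $n\ge2$. For $\boldsymbol\theta=(\alpha_1,\dots,\alpha_n,\beta_1,\dots,\beta_{n-1})^\top\in\mathbb{R}^{2n-1}$ set $\beta_n=0$, and let $\mathbb{P}_{\boldsymbol\theta}$ be the law of a random $n\times n$ matrix $A=(a_{i,j})$ with $a_{i,i}=0$ and $a_{i,j}$ ($i\ne j$) mutually independent Bernoulli with $\mathbb{P}(a_{i,j}=1)=e^{\alpha_i+\beta_j}/(1+e^{\alpha_i+\beta_j})$. Out-degrees $d_i=\sum_{j\ne i}a_{i,j}$, in-degrees $b_j=\sum_{i\ne j}a_{i,j}$. Let $f(x)=e^x/(1+e^x)$ and define $F:\mathbb{R}^{2n-1}\to\mathbb{R}^{2n-1}$ by $F_i(\boldsymbol\theta)=d_i-\sum_{k\ne i}f(\alpha_i+\beta_k)$ for $i=1,\dots,n$ and $F_{n+j}(\boldsymbol\theta)=b_j-\sum_{k\ne j}f(\alpha_k+\beta_j)$ for $j=1,\dots,n-1$ (always with $\beta_n=0$). $F'(\boldsymbol\theta)$ is the Jacobian matrix of $F$ and $F_i'(\boldsymbol\theta)$ the gradient of $F_i$. $\|\cdot\|_\infty$ is the max-norm of vectors. *)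

theory Defs
  imports "HOL-Analysis.Derivative" "Jordan_Normal_Form.Matrix"
begin

(* Indices are 0-based: theta = (alpha_0..alpha_{n-1}, beta_0..beta_{n-2}), beta_{n-1} = 0;
   theta has dimension 2n-1. *)

definition logistic :: "real \<Rightarrow> real" where
  "logistic x = exp x / (1 + exp x)"

definition alpha :: "real vec \<Rightarrow> nat \<Rightarrow> real" where
  "alpha \<theta> i = \<theta> $ i"

definition beta :: "nat \<Rightarrow> real vec \<Rightarrow> nat \<Rightarrow> real" where
  "beta n \<theta> j = (if j < n - 1 then \<theta> $ (n + j) else 0)"

definition linf :: "real vec \<Rightarrow> real" where
  "linf v = Max (insert 0 {\<bar>v $ i\<bar> | i. i < dim_vec v})"

definition outdeg :: "nat \<Rightarrow> (nat \<Rightarrow> nat \<Rightarrow> bool) \<Rightarrow> nat \<Rightarrow> real" where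
  "outdeg n A i = real (card {j. j < n \<and> j \<noteq> i \<and> A i j})"

definition indeg :: "nat \<Rightarrow> (nat \<Rightarrow> nat \<Rightarrow> bool) \<Rightarrow> nat \<Rightarrow> real" where
  "indeg n A j = real (card {i. i < n \<and> i \<noteq> j \<and> A i j})"

(* E_theta d_i and E_theta b_j: sums of the Bernoulli success probabilities *)
definition Eoutdeg :: "nat \<Rightarrow> real vec \<Rightarrow> nat \<Rightarrow> real" where
  "Eoutdeg n \<theta> i = (\<Sum>k\<in>{k. k < n \<and> k \<noteq> i}. logistic (alpha \<theta> i + beta n \<theta> k))"

definition Eindeg :: "nat \<Rightarrow> real vec \<Rightarrow> nat \<Rightarrow> real" where
  "Eindeg n \<theta> j = (\<Sum>k\<in>{k. k < n \<and> k \<noteq> j}. logistic (alpha \<theta> k + beta n \<theta> j))"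

definition Fcomp :: "nat \<Rightarrow> (nat \<Rightarrow> nat \<Rightarrow> bool) \<Rightarrow> real vec \<Rightarrow> nat \<Rightarrow> real" where
  "Fcomp n A \<theta> i =
     (if i < n then outdeg n A i - (\<Sum>k\<in>{k. k < n \<and> k \<noteq> i}. logistic (alpha \<theta> i + beta n \<theta> k))
      else indeg n A (i - n) - (\<Sum>k\<in>{k. k < n \<and> k \<noteq> i - n}. logistic (alpha \<theta> k + beta n \<theta> (i - n))))"

definition Fvec :: "nat \<Rightarrow> (nat \<Rightarrow> nat \<Rightarrow> bool) \<Rightarrow> real vec \<Rightarrow> real vec" where
  "Fvec n A \<theta> = vec (2 * n - 1) (Fcomp n A \<theta>)"

definition vupd :: "real vec \<Rightarrow> nat \<Rightarrow> real \<Rightarrow> real vec" where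
  "vupd \<theta> j t = vec (dim_vec \<theta>) (\<lambda>k. if k = j then t else \<theta> $ k)"

definition Jac :: "nat \<Rightarrow> (nat \<Rightarrow> nat \<Rightarrow> bool) \<Rightarrow> real vec \<Rightarrow> real mat" where
  "Jac n A \<theta> = mat (2 * n - 1) (2 * n - 1)
     (\<lambda>(i, j). deriv (\<lambda>t. Fcomp n A (vupd \<theta> j t) i) (\<theta> $ j))"

end

theory Submission
  imports Defs "Jordan_Normal_Form.Determinant"
begin


definition lp :: "real \<Rightarrow> real" where "lp x = logistic x * (1 - logistic x)"

lemma logistic_bounds: "0 < logistic x" "logistic x < 1"
  unfolding logistic_def by (auto simp: divide_simps add_pos_pos)

lemma ep: "1 + exp (x::real) > 0" by (smt (verit) exp_gt_zero)
lemma ep2: "1 + exp (x::real) \<noteq> 0" using ep[of x] by linarith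

lemma DERIV_logistic: "DERIV logistic x :> lp x"
proof -
  have "DERIV (\<lambda>x. exp x / (1 + exp x)) x :> (exp x * (1 + exp x) - exp x * exp x) / (1 + exp x)^2"
    by (auto intro!: derivative_eq_intros simp: power2_eq_square ep2)
  moreover have "(exp x * (1 + exp x) - exp x * exp x) / (1 + exp x)^2 = lp x"
    unfolding lp_def logistic_def by (simp add: field_simps power2_eq_square ep2) 
  ultimately show ?thesis unfolding logistic_def[abs_def] by simp
qed

lemma DERIV_lp: "DERIV lp x :> lp x * (1 - 2 * logistic x)"
proof -
  have "DERIV (\<lambda>x. logistic x * (1 - logistic x)) x :> lp x * (1 - logistic x) + logistic x * (- lp x)"
    by (auto intro!: derivative_eq_intros DERIV_logistic)
  then show ?thesis unfolding lp_def[abs_def] by (simp add: algebra_simps)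
qed

lemma lp_nonneg: "0 \<le> lp x" using logistic_bounds[of x] unfolding lp_def by auto

lemma lp_le: "lp x \<le> 1/4"
proof -
  have "0 \<le> (logistic x - 1/2)^2" by simp
  then show ?thesis unfolding lp_def by (simp add: power2_eq_square algebra_simps)
qed

lemma lp_deriv_bound: "\<bar>lp x * (1 - 2 * logistic x)\<bar> \<le> 1/4"
proof -
  have "\<bar>1 - 2 * logistic x\<bar> \<le> 1" using logistic_bounds[of x] by auto
  then have "\<bar>lp x\<bar> * \<bar>1 - 2 * logistic x\<bar> \<le> 1/4 * 1"
    using lp_le[of x] lp_nonneg[of x] by (intro mult_mono) auto
  then show ?thesis by (simp add: abs_mult)
qed

lemma lp_lip: "\<bar>lp a - lp b\<bar> \<le> \<bar>a - b\<bar> / 4"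
proof -
  have main: "\<bar>lp b - lp a\<bar> \<le> (b - a) / 4" if ab: "a < b" for a b
  proof -
    obtain z where "lp b - lp a = (b - a) * (lp z * (1 - 2 * logistic z))"
      using MVT2[OF ab, of lp "\<lambda>x. lp x * (1 - 2 * logistic x)"] DERIV_lp by blast
    then have "\<bar>lp b - lp a\<bar> = (b - a) * \<bar>lp z * (1 - 2 * logistic z)\<bar>" using that by (simp add: abs_mult)
    also have "\<dots> \<le> (b - a) * (1/4)" using that lp_deriv_bound[of z] by (intro mult_left_mono) auto
    finally show ?thesis by simp
  qed
  show ?thesis
  proof (cases a b rule: linorder_cases)
    case less then show ?thesis using main[OF less] by (simp add: abs_minus_commute)
  next
    case greater then show ?thesis using main[OF greater] by simp
  qed simp
qed

lemma lp_lower: "lp x \<ge> exp (- \<bar>x\<bar>) / 4"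
proof -
  have lpe: "lp x = exp x / (1 + exp x)^2"
    unfolding lp_def logistic_def by (simp add: field_simps power2_eq_square ep2)
  show ?thesis
  proof (cases "x \<ge> 0")
    case True
    have "1 + exp x \<le> 2 * exp x" using True by simp
    then have "(1 + exp x)^2 \<le> (2 * exp x)^2" by (intro power_mono) (auto simp: add_pos_pos)
    then have "exp x / (2 * exp x)^2 \<le> exp x / (1 + exp x)^2"
      using ep[of x] by (intro divide_left_mono) (auto simp: ep2)
    moreover have "exp (- \<bar>x\<bar>) / 4 = exp x / (2 * exp x)^2"
      using True by (simp add: power2_eq_square exp_minus field_simps)
    ultimately show ?thesis using lpe by linarith
  next
    case False
    have "1 + exp x \<le> 2" using False by simp
    then have "(1 + exp x)^2 \<le> 2^2" by (intro power_mono) (auto simp: add_pos_pos)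
    then have "exp x / 4 \<le> exp x / (1 + exp x)^2"
      using ep[of x] by (intro divide_left_mono) (auto simp: ep2)
    then show ?thesis using False lpe by simp
  qed
qed

lemma linf_nonneg: "0 \<le> linf v"
  unfolding linf_def by (rule Max_ge) auto

lemma linf_fin: "finite {\<bar>v $ i\<bar> | i. i < dim_vec v}" by auto

lemma linf_ge: "i < dim_vec v \<Longrightarrow> \<bar>v $ i\<bar> \<le> linf v"
  unfolding linf_def by (rule Max_ge) auto

lemma linf_le: "0 \<le> c \<Longrightarrow> (\<And>i. i < dim_vec v \<Longrightarrow> \<bar>v $ i\<bar> \<le> c) \<Longrightarrow> linf v \<le> c"
  unfolding linf_def by (subst Max_le_iff) auto




definition uu :: "nat \<Rightarrow> real vec \<Rightarrow> nat \<Rightarrow> nat \<Rightarrow> real" where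
  "uu n \<theta> i k = lp (alpha \<theta> i + beta n \<theta> k)"

definition jent :: "nat \<Rightarrow> real vec \<Rightarrow> nat \<Rightarrow> nat \<Rightarrow> real" where
  "jent n \<theta> i j = (if i < n then
      (if j = i then - (\<Sum>k\<in>{k. k < n \<and> k \<noteq> i}. uu n \<theta> i k)
       else if n \<le> j \<and> j - n \<noteq> i then - uu n \<theta> i (j - n) else 0)
    else
      (if j = i then - (\<Sum>k\<in>{k. k < n \<and> k \<noteq> i - n}. uu n \<theta> k (i - n))
       else if j < n \<and> j \<noteq> i - n then - uu n \<theta> j (i - n) else 0))"

lemma alpha_vupd: "i < dim_vec \<theta> \<Longrightarrow> alpha (vupd \<theta> j t) i = (if i = j then t else \<theta> $ i)"
  unfolding alpha_def vupd_def by simp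

lemma beta_vupd: "dim_vec \<theta> = 2 * n - 1 \<Longrightarrow>
   beta n (vupd \<theta> j t) k = (if k < n - 1 then (if n + k = j then t else \<theta> $ (n + k)) else 0)"
  unfolding beta_def vupd_def by auto

lemma vupd_same: "j < dim_vec \<theta> \<Longrightarrow> vupd \<theta> j (\<theta> $ j) = \<theta>"
  unfolding vupd_def by (intro eq_vecI) auto

lemma DERIV_alpha: "i < dim_vec \<theta> \<Longrightarrow> DERIV (\<lambda>t. alpha (vupd \<theta> j t) i) x :> (if i = j then 1 else 0)"
  by (cases "i = j") (simp_all add: alpha_vupd)

lemma DERIV_beta: "dim_vec \<theta> = 2 * n - 1 \<Longrightarrow>
   DERIV (\<lambda>t. beta n (vupd \<theta> j t) k) x :> (if k < n - 1 \<and> n + k = j then 1 else 0)"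
  by (cases "k < n - 1"; cases "n + k = j") (simp_all add: beta_vupd)

lemma DERIV_summand:
  assumes "i < dim_vec \<theta>" "dim_vec \<theta> = 2 * n - 1"
  shows "DERIV (\<lambda>t. logistic (alpha (vupd \<theta> j t) i + beta n (vupd \<theta> j t) k)) x :>
     lp (alpha (vupd \<theta> j x) i + beta n (vupd \<theta> j x) k) *
       ((if i = j then 1 else 0) + (if k < n - 1 \<and> n + k = j then 1 else 0))"
  using DERIV_chain2[OF DERIV_logistic DERIV_add[OF DERIV_alpha[OF assms(1)] DERIV_beta[OF assms(2)]]]
  by (simp add: o_def)

lemma Jac_entry:
  assumes n: "n \<ge> 2" and d: "dim_vec \<theta> = 2 * n - 1" and i: "i < 2 * n - 1" and j: "j < 2 * n - 1"
  shows "Jac n A \<theta> $$ (i, j) = jent n \<theta> i j"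
proof -
  have J: "Jac n A \<theta> $$ (i, j) = deriv (\<lambda>t. Fcomp n A (vupd \<theta> j t) i) (\<theta> $ j)"
    unfolding Jac_def using i j by simp
  show ?thesis
  proof (cases "i < n")
    case True
    let ?S = "{k. k < n \<and> k \<noteq> i}"
    have fe: "(\<lambda>t. Fcomp n A (vupd \<theta> j t) i) = (\<lambda>t. outdeg n A i - (\<Sum>k\<in>?S. logistic (alpha (vupd \<theta> j t) i + beta n (vupd \<theta> j t) k)))"
      unfolding Fcomp_def using True by simp
    have "DERIV (\<lambda>t. Fcomp n A (vupd \<theta> j t) i) (\<theta> $ j) :>
        0 - (\<Sum>k\<in>?S. lp (alpha (vupd \<theta> j (\<theta> $ j)) i + beta n (vupd \<theta> j (\<theta> $ j)) k) *
       ((if i = j then 1 else 0) + (if k < n - 1 \<and> n + k = j then 1 else 0)))"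
      unfolding fe using i d
      by (intro DERIV_diff DERIV_const DERIV_sum DERIV_summand) auto
    then have D: "Jac n A \<theta> $$ (i, j) = - (\<Sum>k\<in>?S. uu n \<theta> i k *
       ((if i = j then 1 else 0) + (if k < n - 1 \<and> n + k = j then 1 else 0)))"
      unfolding J uu_def using vupd_same[of j \<theta>] j d by (simp add: DERIV_imp_deriv)
    show ?thesis
    proof (cases "j = i")
      case True
      then show ?thesis unfolding D jent_def using \<open>i < n\<close> by (auto intro!: sum.cong)
    next
      case False
      have "(\<Sum>k\<in>?S. uu n \<theta> i k * ((if i = j then 1 else 0) + (if k < n - 1 \<and> n + k = j then 1 else 0)))
          = (\<Sum>k\<in>?S. if k = j - n \<and> n \<le> j then uu n \<theta> i k else 0)"
        using False j by (intro sum.cong) auto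
      also have "\<dots> = (if n \<le> j \<and> j - n \<noteq> i then uu n \<theta> i (j - n) else 0)"
        using j by (auto simp: sum.delta' )
      finally show ?thesis unfolding D jent_def using \<open>i < n\<close> False by auto
    qed
  next
    case False
    let ?S = "{k. k < n \<and> k \<noteq> i - n}"
    have fe: "(\<lambda>t. Fcomp n A (vupd \<theta> j t) i) = (\<lambda>t. indeg n A (i - n) - (\<Sum>k\<in>?S. logistic (alpha (vupd \<theta> j t) k + beta n (vupd \<theta> j t) (i - n))))"
      unfolding Fcomp_def using False by simp
    have "DERIV (\<lambda>t. Fcomp n A (vupd \<theta> j t) i) (\<theta> $ j) :>
        0 - (\<Sum>k\<in>?S. lp (alpha (vupd \<theta> j (\<theta> $ j)) k + beta n (vupd \<theta> j (\<theta> $ j)) (i - n)) *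
       ((if k = j then 1 else 0) + (if i - n < n - 1 \<and> n + (i - n) = j then 1 else 0)))"
      unfolding fe using i d
      by (intro DERIV_diff DERIV_const DERIV_sum DERIV_summand) auto
    then have D: "Jac n A \<theta> $$ (i, j) = - (\<Sum>k\<in>?S. uu n \<theta> k (i - n) *
       ((if k = j then 1 else 0) + (if i - n < n - 1 \<and> n + (i - n) = j then 1 else 0)))"
      unfolding J uu_def using vupd_same[of j \<theta>] j d by (simp add: DERIV_imp_deriv)
    show ?thesis
    proof (cases "j = i")
      case True
      then show ?thesis unfolding D jent_def using False i by (auto intro!: sum.cong)
    next
      case ji: False
      have "(\<Sum>k\<in>?S. uu n \<theta> k (i - n) * ((if k = j then 1 else 0) + (if i - n < n - 1 \<and> n + (i - n) = j then 1 else 0)))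
          = (\<Sum>k\<in>?S. if k = j then uu n \<theta> k (i - n) else 0)"
        using False ji by (intro sum.cong) auto
      also have "\<dots> = (if j < n \<and> j \<noteq> i - n then uu n \<theta> j (i - n) else 0)"
        by (auto simp: sum.delta')
      finally show ?thesis unfolding D jent_def using False ji by auto
    qed
  qed
qed




lemma sum_split_add: "(\<Sum>j<a+(b::nat). g j) = (\<Sum>j<a. g j) + (\<Sum>k<b. g (a + k))"
  by (induction b) (auto simp: add.assoc)

lemma split1:
  fixes n :: nat
  assumes "i < n"
  shows "(\<Sum>j<2*n-1. if j = i then a else if n \<le> j \<and> j - n \<noteq> i then b (j - n) else 0)
     = a + (\<Sum>k\<in>{k. k < n - 1 \<and> k \<noteq> i}. b k)" (is "?L = _")
proof -
  have e: "2*n-1 = n + (n - 1)" using assms by auto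
  have "?L = (\<Sum>j<n. if j = i then a else if n \<le> j \<and> j - n \<noteq> i then b (j - n) else 0)
     + (\<Sum>k<n-1. if n + k = i then a else if n \<le> n + k \<and> n + k - n \<noteq> i then b (n + k - n) else 0)"
    unfolding e sum_split_add ..
  also have "(\<Sum>j<n. if j = i then a else if n \<le> j \<and> j - n \<noteq> i then b (j - n) else 0) = (\<Sum>j<n. if j = i then a else 0)"
    by (intro sum.cong) auto
  also have "\<dots> = a" using assms by (simp add: sum.delta)
  also have "(\<Sum>k<n-1. if n + k = i then a else if n \<le> n + k \<and> n + k - n \<noteq> i then b (n + k - n) else 0)
      = (\<Sum>k<n-1. if k \<noteq> i then b k else 0)"
    using assms by (intro sum.cong) auto
  also have "\<dots> = (\<Sum>k\<in>{k. k < n - 1 \<and> k \<noteq> i}. b k)"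
    by (subst sum.inter_filter[symmetric]) (auto intro!: sum.cong)
  finally show ?thesis .
qed

lemma split2:
  fixes n :: nat
  assumes "n \<le> i" "i < 2 * n - 1"
  shows "(\<Sum>j<2*n-1. if j = i then a else if j < n \<and> j \<noteq> i - n then b j else 0)
     = a + (\<Sum>k\<in>{k. k < n \<and> k \<noteq> i - n}. b k)" (is "?L = _")
proof -
  have e: "2*n-1 = n + (n - 1)" using assms by auto
  have "?L = (\<Sum>j<n. if j = i then a else if j < n \<and> j \<noteq> i - n then b j else 0)
     + (\<Sum>k<n-1. if n + k = i then a else if n + k < n \<and> n + k \<noteq> i - n then b (n + k) else 0)"
    unfolding e sum_split_add ..
  also have "(\<Sum>j<n. if j = i then a else if j < n \<and> j \<noteq> i - n then b j else 0)
     = (\<Sum>j<n. if j \<noteq> i - n then b j else 0)"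
    using assms by (intro sum.cong) auto
  also have "\<dots> = (\<Sum>k\<in>{k. k < n \<and> k \<noteq> i - n}. b k)"
    by (subst sum.inter_filter[symmetric]) (auto intro!: sum.cong)
  also have "(\<Sum>k<n-1. if n + k = i then a else if n + k < n \<and> n + k \<noteq> i - n then b (n + k) else 0) = (\<Sum>k<n-1. if k = i - n then a else 0)"
    using assms by (intro sum.cong) auto
  also have "\<dots> = a" using assms by (subgoal_tac "i - n < n - 1") (simp_all add: sum.delta)
  finally show ?thesis by (simp add: add.commute)
qed

lemma card_S1: "i < n \<Longrightarrow> card {k. k < n \<and> k \<noteq> i} = n - 1"
proof -
  assume "i < n"
  have "{k. k < n \<and> k \<noteq> i} = {..<n} - {i}" by auto
  then show ?thesis using \<open>i < n\<close> by simp
qed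

lemma card_S2: "card {k. k < n - 1 \<and> k \<noteq> i} \<le> n - 1"
proof -
  have "card {k. k < n - 1 \<and> k \<noteq> i} \<le> card {..<n-1}" by (intro card_mono) auto
  then show ?thesis by simp
qed

lemma comp_diff:
  assumes "dim_vec x = dim_vec y" "i < dim_vec y"
  shows "\<bar>x $ i - y $ i\<bar> \<le> linf (x - y)"
  using linf_ge[of i "x - y"] assms by simp

lemma uu_lip:
  assumes d: "dim_vec x = 2 * n - 1" "dim_vec y = 2 * n - 1" and i: "i < 2 * n - 1"
  shows "\<bar>uu n x i k - uu n y i k\<bar> \<le> linf (x - y) / 2"
proof -
  have a: "\<bar>alpha x i - alpha y i\<bar> \<le> linf (x - y)"
    unfolding alpha_def using comp_diff[of x y i] d i by auto
  have b: "\<bar>beta n x k - beta n y k\<bar> \<le> linf (x - y)"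
    unfolding beta_def using comp_diff[of x y "n + k"] d linf_nonneg[of "x - y"] by auto
  have "\<bar>uu n x i k - uu n y i k\<bar> \<le> \<bar>(alpha x i + beta n x k) - (alpha y i + beta n y k)\<bar> / 4"
    unfolding uu_def by (rule lp_lip)
  also have "\<dots> \<le> (2 * linf (x - y)) / 4" using a b by (intro divide_right_mono) auto
  finally show ?thesis by simp
qed

lemma row_bounds:
  assumes n: "n \<ge> 2" and d: "dim_vec x = 2 * n - 1" "dim_vec y = 2 * n - 1" and i: "i < 2 * n - 1"
  shows "(\<Sum>j<2*n-1. \<bar>jent n x i j - jent n y i j\<bar>) \<le> (real n - 1) * linf (x - y)"
    and "\<And>j. \<bar>jent n x i j - jent n y i j\<bar> \<le> (real n - 1) / 2 * linf (x - y)"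
proof -
  let ?d = "linf (x - y)"
  have dn: "0 \<le> ?d" by (rule linf_nonneg)
  have U: "\<And>a k. a < 2 * n - 1 \<Longrightarrow> \<bar>uu n x a k - uu n y a k\<bar> \<le> ?d / 2" using uu_lip d by blast
  have "(\<Sum>j<2*n-1. \<bar>jent n x i j - jent n y i j\<bar>) \<le> (real n - 1) * ?d \<and>
        (\<forall>j. \<bar>jent n x i j - jent n y i j\<bar> \<le> (real n - 1) / 2 * ?d)"
  proof (cases "i < n")
    case True
    let ?S = "{k. k < n \<and> k \<noteq> i}"
    let ?a = "\<bar>(\<Sum>k\<in>?S. uu n x i k) - (\<Sum>k\<in>?S. uu n y i k)\<bar>"
    have ab: "?a \<le> (real n - 1) * ?d / 2"
    proof -
      have "?a = \<bar>\<Sum>k\<in>?S. uu n x i k - uu n y i k\<bar>" by (simp add: sum_subtractf)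
      also have "\<dots> \<le> (\<Sum>k\<in>?S. \<bar>uu n x i k - uu n y i k\<bar>)" by (rule sum_abs)
      also have "\<dots> \<le> (\<Sum>k\<in>?S. ?d / 2)" using U i by (intro sum_mono) auto
      also have "\<dots> = (real n - 1) * ?d / 2" using card_S1[OF True] n by (simp add: of_nat_diff)
      finally show ?thesis .
    qed
    have eq: "\<And>j. \<bar>jent n x i j - jent n y i j\<bar> = (if j = i then ?a else if n \<le> j \<and> j - n \<noteq> i then \<bar>uu n x i (j - n) - uu n y i (j - n)\<bar> else 0)"
      unfolding jent_def using True by (auto simp: abs_minus_commute)
    have "(\<Sum>j<2*n-1. \<bar>jent n x i j - jent n y i j\<bar>) = ?a + (\<Sum>k\<in>{k. k < n - 1 \<and> k \<noteq> i}. \<bar>uu n x i k - uu n y i k\<bar>)"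
      unfolding eq by (rule split1[OF True])
    also have "\<dots> \<le> (real n - 1) * ?d / 2 + (\<Sum>k\<in>{k. k < n - 1 \<and> k \<noteq> i}. ?d / 2)"
      using ab U i by (intro add_mono sum_mono) auto
    also have "(\<Sum>k\<in>{k. k < n - 1 \<and> k \<noteq> i}. ?d / 2) \<le> (real n - 1) * ?d / 2"
    proof -
      have "(\<Sum>k\<in>{k. k < n - 1 \<and> k \<noteq> i}. ?d / 2) = real (card {k. k < n - 1 \<and> k \<noteq> i}) * (?d / 2)" by simp
      also have "\<dots> \<le> real (n - 1) * (?d / 2)" using card_S2[of n i] dn by (intro mult_right_mono) auto
      finally show ?thesis using n by (simp add: of_nat_diff)
    qed
    moreover have "\<forall>j. \<bar>jent n x i j - jent n y i j\<bar> \<le> (real n - 1) / 2 * ?d"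
    proof
      fix j
      have "?d / 2 \<le> (real n - 1) / 2 * ?d" using n dn mult_right_mono[of 1 "real n - 1" "?d"] by simp
      then show "\<bar>jent n x i j - jent n y i j\<bar> \<le> (real n - 1) / 2 * ?d"
        unfolding eq using ab U[of i "j - n"] i dn by auto
    qed
    moreover have "(real n - 1) * ?d / 2 + (real n - 1) * ?d / 2 = (real n - 1) * ?d" by simp
    ultimately show ?thesis apply (intro conjI) apply linarith by blast
  next
    case False
    let ?S = "{k. k < n \<and> k \<noteq> i - n}"
    let ?a = "\<bar>(\<Sum>k\<in>?S. uu n x k (i - n)) - (\<Sum>k\<in>?S. uu n y k (i - n))\<bar>"
    have U2: "\<And>k. k < n \<Longrightarrow> \<bar>uu n x k (i - n) - uu n y k (i - n)\<bar> \<le> ?d / 2" using U n by auto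
    have ab: "?a \<le> (real n - 1) * ?d / 2"
    proof -
      have "?a = \<bar>\<Sum>k\<in>?S. uu n x k (i - n) - uu n y k (i - n)\<bar>" by (simp add: sum_subtractf)
      also have "\<dots> \<le> (\<Sum>k\<in>?S. \<bar>uu n x k (i - n) - uu n y k (i - n)\<bar>)" by (rule sum_abs)
      also have "\<dots> \<le> (\<Sum>k\<in>?S. ?d / 2)" using U2 by (intro sum_mono) auto
      also have "\<dots> = (real n - 1) * ?d / 2" using card_S1[of "i - n" n] n i False by (simp add: of_nat_diff)
      finally show ?thesis .
    qed
    have eq: "\<And>j. \<bar>jent n x i j - jent n y i j\<bar> = (if j = i then ?a else if j < n \<and> j \<noteq> i - n then \<bar>uu n x j (i - n) - uu n y j (i - n)\<bar> else 0)"
      unfolding jent_def using False by (auto simp: abs_minus_commute)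
    have "(\<Sum>j<2*n-1. \<bar>jent n x i j - jent n y i j\<bar>) = ?a + (\<Sum>k\<in>?S. \<bar>uu n x k (i - n) - uu n y k (i - n)\<bar>)"
      unfolding eq using False i by (intro split2) auto
    also have "\<dots> \<le> (real n - 1) * ?d / 2 + (\<Sum>k\<in>?S. ?d / 2)"
      using ab U2 by (intro add_mono sum_mono) auto
    also have "(\<Sum>k\<in>?S. ?d / 2) = (real n - 1) * ?d / 2"
      using card_S1[of "i - n" n] n i False by (simp add: of_nat_diff)
    moreover have "\<forall>j. \<bar>jent n x i j - jent n y i j\<bar> \<le> (real n - 1) / 2 * ?d"
    proof
      fix j
      have "?d / 2 \<le> (real n - 1) / 2 * ?d" using n dn mult_right_mono[of 1 "real n - 1" "?d"] by simp
      then show "\<bar>jent n x i j - jent n y i j\<bar> \<le> (real n - 1) / 2 * ?d"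
        unfolding eq using ab U2[of j] dn by auto
    qed
    moreover have "(real n - 1) * ?d / 2 + (real n - 1) * ?d / 2 = (real n - 1) * ?d" by simp
    ultimately show ?thesis apply (intro conjI) apply linarith by blast
  qed
  then show "(\<Sum>j<2*n-1. \<bar>jent n x i j - jent n y i j\<bar>) \<le> (real n - 1) * linf (x - y)"
    and "\<And>j. \<bar>jent n x i j - jent n y i j\<bar> \<le> (real n - 1) / 2 * linf (x - y)" by auto
qed

lemma Jac_dim: "Jac n A \<theta> \<in> carrier_mat (2 * n - 1) (2 * n - 1)"
  unfolding Jac_def by simp

lemma Jac_dims[simp]: "dim_row (Jac n A \<theta>) = 2 * n - 1" "dim_col (Jac n A \<theta>) = 2 * n - 1"
  unfolding Jac_def by simp_all

lemma part_a:
  assumes n: "n \<ge> 2" and d: "dim_vec x = 2 * n - 1" "dim_vec y = 2 * n - 1" "dim_vec v = 2 * n - 1"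
  shows "linf ((Jac n A x - Jac n A y) *\<^sub>v v) \<le> (real n - 1) * linf (x - y) * linf v \<and>
            (\<forall>i < 2 * n - 1. linf (row (Jac n A x) i - row (Jac n A y) i)
                               \<le> (real n - 1) / 2 * linf (x - y))"
proof
  let ?N = "2 * n - 1"
  have dn: "0 \<le> linf (x - y)" by (rule linf_nonneg)
  have vn: "0 \<le> linf v" by (rule linf_nonneg)
  have D: "\<And>i j. i < ?N \<Longrightarrow> j < ?N \<Longrightarrow> (Jac n A x - Jac n A y) $$ (i, j) = jent n x i j - jent n y i j"
    using Jac_entry[OF n d(1)] Jac_entry[OF n d(2)] by simp
  show "linf ((Jac n A x - Jac n A y) *\<^sub>v v) \<le> (real n - 1) * linf (x - y) * linf v"
  proof (rule linf_le)
    show "0 \<le> (real n - 1) * linf (x - y) * linf v" using n dn vn by simp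
  next
    fix i assume "i < dim_vec ((Jac n A x - Jac n A y) *\<^sub>v v)"
    then have i: "i < ?N" by simp
    have "((Jac n A x - Jac n A y) *\<^sub>v v) $ i = (\<Sum>j\<in>{0..<dim_vec v}. row (Jac n A x - Jac n A y) i $ j * v $ j)"
      using i by (simp add: scalar_prod_def)
    also have "\<dots> = (\<Sum>j<?N. (jent n x i j - jent n y i j) * v $ j)"
      using i d D by (auto simp: lessThan_atLeast0 intro!: sum.cong)
    finally have "((Jac n A x - Jac n A y) *\<^sub>v v) $ i = (\<Sum>j<?N. (jent n x i j - jent n y i j) * v $ j)" .
    then have "\<bar>((Jac n A x - Jac n A y) *\<^sub>v v) $ i\<bar> \<le> (\<Sum>j<?N. \<bar>jent n x i j - jent n y i j\<bar> * \<bar>v $ j\<bar>)"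
      by (auto intro: order.trans[OF sum_abs] simp: abs_mult)
    also have "\<dots> \<le> (\<Sum>j<?N. \<bar>jent n x i j - jent n y i j\<bar> * linf v)"
      using linf_ge[of _ v] d by (intro sum_mono mult_left_mono) auto
    also have "\<dots> = (\<Sum>j<?N. \<bar>jent n x i j - jent n y i j\<bar>) * linf v" by (simp add: sum_distrib_right)
    also have "\<dots> \<le> (real n - 1) * linf (x - y) * linf v"
      using row_bounds(1)[OF n d(1,2) i] vn by (intro mult_right_mono) auto
    finally show "\<bar>((Jac n A x - Jac n A y) *\<^sub>v v) $ i\<bar> \<le> (real n - 1) * linf (x - y) * linf v" .
  qed
next
  let ?N = "2 * n - 1"
  have dn: "0 \<le> linf (x - y)" by (rule linf_nonneg)
  show "\<forall>i < 2 * n - 1. linf (row (Jac n A x) i - row (Jac n A y) i) \<le> (real n - 1) / 2 * linf (x - y)"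
  proof (intro allI impI linf_le)
    fix i assume i: "i < ?N"
    show "0 \<le> (real n - 1) / 2 * linf (x - y)" using n dn by simp
    fix j assume "j < dim_vec (row (Jac n A x) i - row (Jac n A y) i)"
    then have j: "j < ?N" by simp
    have "(row (Jac n A x) i - row (Jac n A y) i) $ j = jent n x i j - jent n y i j"
      using Jac_entry[OF n d(1) i j] Jac_entry[OF n d(2) i j] i j by simp
    then show "\<bar>(row (Jac n A x) i - row (Jac n A y) i) $ j\<bar> \<le> (real n - 1) / 2 * linf (x - y)"
      using row_bounds(2)[OF n d(1,2) i] by simp
  qed
qed




lemma conv_bounds:
  fixes p y :: "nat \<Rightarrow> real" and n :: nat
  assumes "\<And>k. k < n \<Longrightarrow> 0 \<le> p k" "(\<Sum>k<n. p k) = 1" "\<And>k. k < n \<Longrightarrow> lo \<le> y k \<and> y k \<le> hi"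
  shows "lo \<le> (\<Sum>k<n. p k * y k)" "(\<Sum>k<n. p k * y k) \<le> hi"
proof -
  have "(\<Sum>k<n. p k * lo) \<le> (\<Sum>k<n. p k * y k)" using assms by (intro sum_mono mult_left_mono) auto
  then show "lo \<le> (\<Sum>k<n. p k * y k)" using assms(2) by (simp add: sum_distrib_right[symmetric])
  have "(\<Sum>k<n. p k * y k) \<le> (\<Sum>k<n. p k * hi)" using assms by (intro sum_mono mult_left_mono) auto
  then show "(\<Sum>k<n. p k * y k) \<le> hi" using assms(2) by (simp add: sum_distrib_right[symmetric])
qed

lemma tv_bound:
  fixes p q y :: "nat \<Rightarrow> real" and n :: nat
  assumes "\<And>k. k < n \<Longrightarrow> 0 \<le> p k" "(\<Sum>k<n. p k) = 1"
    "\<And>k. k < n \<Longrightarrow> 0 \<le> q k" "(\<Sum>k<n. q k) = 1"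
    "\<And>k. k < n \<Longrightarrow> lo \<le> y k \<and> y k \<le> hi"
  shows "(\<Sum>k<n. p k * y k) - (\<Sum>k<n. q k * y k) \<le> (1 - (\<Sum>k<n. min (p k) (q k))) * (hi - lo)"
proof -
  let ?s = "\<Sum>k<n. min (p k) (q k)"
  have a: "(\<Sum>k<n. (p k - min (p k) (q k)) * y k) \<le> (\<Sum>k<n. (p k - min (p k) (q k)) * hi)"
    using assms by (intro sum_mono mult_left_mono) auto
  have b: "(\<Sum>k<n. (q k - min (p k) (q k)) * lo) \<le> (\<Sum>k<n. (q k - min (p k) (q k)) * y k)"
    using assms by (intro sum_mono mult_left_mono) auto
  have "(\<Sum>k<n. p k * y k) - (\<Sum>k<n. q k * y k) =
     (\<Sum>k<n. (p k - min (p k) (q k)) * y k) - (\<Sum>k<n. (q k - min (p k) (q k)) * y k)"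
    by (simp add: sum_subtractf[symmetric] algebra_simps)
  also have "\<dots> \<le> (\<Sum>k<n. (p k - min (p k) (q k)) * hi) - (\<Sum>k<n. (q k - min (p k) (q k)) * lo)"
    using a b by linarith
  also have "\<dots> = (1 - ?s) * hi - (1 - ?s) * lo"
  proof -
    have "(\<Sum>k<n. (p k - min (p k) (q k)) * hi) = (1 - ?s) * hi"
      using assms(2) by (simp add: sum_distrib_right[symmetric] sum_subtractf)
    moreover have "(\<Sum>k<n. (q k - min (p k) (q k)) * lo) = (1 - ?s) * lo"
      using assms(4) by (simp add: sum_distrib_right[symmetric] sum_subtractf)
    ultimately show ?thesis by simp
  qed
  finally show ?thesis by (simp add: algebra_simps)
qed

lemma sum_filter_ne: "(\<Sum>k\<in>{k. k < (n::nat) \<and> k \<noteq> i}. f k) = (\<Sum>k<n. if k \<noteq> i then f k else (0::real))"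
proof -
  have "(\<Sum>k<n. if k\<noteq>i then f k else 0) = sum f ({..<n} \<inter> {k. k \<noteq> i})" using sum.inter_restrict[of "{..<n}" f "{k. k\<noteq>i}"] by simp
  moreover have "{..<n} \<inter> {k. k \<noteq> i} = {k. k<n \<and> k\<noteq>i}" by auto
  ultimately show ?thesis by simp
qed

lemma card_ne: "i < (n::nat) \<Longrightarrow> card {k. k < n \<and> k \<noteq> i} = n - 1"
proof -
  assume "i < n"
  have "{k. k < n \<and> k \<noteq> i} = {..<n} - {i}" by auto
  then show ?thesis using \<open>i < n\<close> by simp
qed

locale side =
  fixes n :: nat and a :: "nat \<Rightarrow> nat \<Rightarrow> real" and m M \<epsilon> :: real and f g :: "nat \<Rightarrow> real"
  assumes n3: "n \<ge> 3" and mpos: "m > 0" and mM: "m \<le> M"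
    and ab: "\<And>i k. i < n \<Longrightarrow> k < n \<Longrightarrow> i \<noteq> k \<Longrightarrow> m \<le> a i k \<and> a i k \<le> M"
    and eq: "\<And>i. i < n \<Longrightarrow> \<bar>\<Sum>k\<in>{k. k < n \<and> k \<noteq> i}. a i k * (f i - g k)\<bar> \<le> \<epsilon>"
begin

definition V where "V i = (\<Sum>k\<in>{k. k < n \<and> k \<noteq> i}. a i k)"
definition P where "P i k = (if k \<noteq> i then a i k / V i else 0)"
definition E where "E = \<epsilon> / ((real n - 1) * m)"
definition gmax where "gmax = Max (g ` {..<n})"
definition gmin where "gmin = Min (g ` {..<n})"

lemma n0: "0 < n" using n3 by auto

lemma g_range: "k < n \<Longrightarrow> gmin \<le> g k \<and> g k \<le> gmax"
  unfolding gmax_def gmin_def by auto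

lemma V_lower: "i < n \<Longrightarrow> (real n - 1) * m \<le> V i"
proof -
  assume i: "i < n"
  have "(\<Sum>k\<in>{k. k < n \<and> k \<noteq> i}. m) \<le> V i" unfolding V_def using ab i by (intro sum_mono) auto
  then show ?thesis using card_ne[OF i] n3 by (simp add: of_nat_diff)
qed

lemma V_upper: "i < n \<Longrightarrow> V i \<le> (real n - 1) * M"
proof -
  assume i: "i < n"
  have "V i \<le> (\<Sum>k\<in>{k. k < n \<and> k \<noteq> i}. M)" unfolding V_def using ab i by (intro sum_mono) auto
  then show ?thesis using card_ne[OF i] n3 by (simp add: of_nat_diff)
qed

lemma nm_pos: "0 < (real n - 1) * m" using n3 mpos by simp

lemma V_pos: "i < n \<Longrightarrow> 0 < V i" using V_lower nm_pos by (meson less_le_trans)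

lemma P_nonneg: "i < n \<Longrightarrow> k < n \<Longrightarrow> 0 \<le> P i k"
  unfolding P_def using ab[of i k] V_pos[of i] mpos by auto

lemma P_sum: "i < n \<Longrightarrow> (\<Sum>k<n. P i k) = 1"
proof -
  assume i: "i < n"
  have "(\<Sum>k<n. P i k) = (\<Sum>k<n. (if k \<noteq> i then a i k else 0) / V i)"
    unfolding P_def by (intro sum.cong) auto
  also have "\<dots> = (\<Sum>k<n. if k \<noteq> i then a i k else 0) / V i"
    by (simp add: sum_divide_distrib)
  also have "\<dots> = 1" using V_pos[OF i] unfolding V_def sum_filter_ne by simp
  finally show ?thesis .
qed

lemma eps_nonneg: "0 \<le> \<epsilon>" using eq[of 0] n0 by linarith

lemma E_nonneg: "0 \<le> E" unfolding E_def using eps_nonneg nm_pos by simp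

lemma f_repr: "i < n \<Longrightarrow> \<bar>f i - (\<Sum>k<n. P i k * g k)\<bar> \<le> E"
proof -
  assume i: "i < n"
  let ?r = "\<Sum>k\<in>{k. k < n \<and> k \<noteq> i}. a i k * (f i - g k)"
  have r: "?r = f i * V i - (\<Sum>k<n. if k \<noteq> i then a i k * g k else 0)"
  proof -
    have "?r = (\<Sum>k<n. (if k \<noteq> i then a i k * f i else 0) - (if k \<noteq> i then a i k * g k else 0))"
      unfolding sum_filter_ne by (intro sum.cong) (auto simp: algebra_simps)
    also have "\<dots> = (\<Sum>k<n. (if k \<noteq> i then a i k else 0) * f i) - (\<Sum>k<n. if k \<noteq> i then a i k * g k else 0)"
      unfolding sum_subtractf by (intro arg_cong2[where f="(-)"] sum.cong) auto
    also have "\<dots> = f i * V i - (\<Sum>k<n. if k \<noteq> i then a i k * g k else 0)"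
      unfolding V_def sum_filter_ne sum_distrib_right[symmetric] by simp
    finally show ?thesis .
  qed
  have s: "(\<Sum>k<n. P i k * g k) = (\<Sum>k<n. if k \<noteq> i then a i k * g k else 0) / V i"
  proof -
    have "(\<Sum>k<n. P i k * g k) = (\<Sum>k<n. (if k \<noteq> i then a i k * g k else 0) / V i)"
      unfolding P_def by (intro sum.cong) auto
    then show ?thesis by (simp add: sum_divide_distrib)
  qed
  have "f i - (\<Sum>k<n. P i k * g k) = ?r / V i"
    unfolding s r using V_pos[OF i] by (simp add: field_simps)
  then have "\<bar>f i - (\<Sum>k<n. P i k * g k)\<bar> = \<bar>?r\<bar> / V i" using V_pos[OF i] by simp
  also have "\<dots> \<le> \<epsilon> / V i" using eq[OF i] V_pos[OF i] by (intro divide_right_mono) auto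
  also have "\<dots> \<le> \<epsilon> / ((real n - 1) * m)"
    using V_lower[OF i] nm_pos eps_nonneg by (intro divide_left_mono) auto
  finally show ?thesis unfolding E_def .
qed

lemma f_range: "i < n \<Longrightarrow> gmin - E \<le> f i \<and> f i \<le> gmax + E"
  using f_repr[of i] conv_bounds[of n "P i" gmin g gmax] P_nonneg P_sum g_range by fastforce

lemma overlap: "i < n \<Longrightarrow> i' < n \<Longrightarrow> m / (2 * M) \<le> (\<Sum>k<n. min (P i k) (P i' k))"
proof -
  assume i: "i < n" and i': "i' < n"
  let ?c = "m / ((real n - 1) * M)"
  have Mpos: "0 < M" using mpos mM by linarith
  have c0: "0 \<le> ?c" using mpos Mpos n3 by simp
  have lowP: "?c \<le> P j k" if "j < n" "k < n" "k \<noteq> j" for j k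
  proof -
    have "m / ((real n - 1) * M) \<le> m / V j"
      using V_upper[OF that(1)] V_pos[OF that(1)] mpos by (intro divide_left_mono) auto
    also have "\<dots> \<le> a j k / V j" using ab[OF that(1,2)] that V_pos[OF that(1)] by (intro divide_right_mono) auto
    finally show ?thesis unfolding P_def using that by simp
  qed
  have "(\<Sum>k<n. if k \<noteq> i \<and> k \<noteq> i' then ?c else 0) \<le> (\<Sum>k<n. min (P i k) (P i' k))"
    using lowP i i' P_nonneg by (intro sum_mono) auto
  moreover have "(\<Sum>k<n. if k \<noteq> i \<and> k \<noteq> i' then ?c else 0) = ?c * real (card ({..<n} - {i, i'}))"
    by (subst sum.If_cases) (auto simp: Int_def set_diff_eq mult.commute)
  moreover have "real (card ({..<n} - {i, i'})) \<ge> real n - 2"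
  proof -
    have "card ({..<n} - {i, i'}) \<ge> card {..<n} - card {i, i'}" by (rule diff_card_le_card_Diff) auto
    moreover have "card {i, i'} \<le> 2" by (simp add: card_insert_le_m1)
    ultimately show ?thesis by simp
  qed
  ultimately have "?c * (real n - 2) \<le> (\<Sum>k<n. min (P i k) (P i' k))"
    using c0 mult_left_mono[of "real n - 2" "real (card ({..<n} - {i, i'}))" ?c] by linarith
  moreover have "m / (2 * M) \<le> ?c * (real n - 2)"
  proof -
    have "?c * (real n - 2) = (m / M) * ((real n - 2) / (real n - 1))" using n3 by (simp add: field_simps)
    moreover have "1/2 \<le> (real n - 2) / (real n - 1)" using n3 by (simp add: field_simps)
    moreover have "m / (2 * M) = (m / M) * (1/2)" by simp
    ultimately show ?thesis using mpos Mpos by (metis divide_nonneg_nonneg less_le mult_left_mono)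
  qed
  ultimately show ?thesis by linarith
qed

lemma osc: "i < n \<Longrightarrow> i' < n \<Longrightarrow> f i - f i' \<le> (1 - m / (2 * M)) * (gmax - gmin) + 2 * E"
proof -
  assume i: "i < n" and i': "i' < n"
  have "(\<Sum>k<n. P i k * g k) - (\<Sum>k<n. P i' k * g k) \<le> (1 - (\<Sum>k<n. min (P i k) (P i' k))) * (gmax - gmin)"
    using tv_bound[of n "P i" "P i'" gmin g gmax] P_nonneg P_sum g_range i i' by blast
  also have "\<dots> \<le> (1 - m / (2 * M)) * (gmax - gmin)"
    using overlap[OF i i'] g_range[of 0] n0 by (intro mult_right_mono) auto
  finally show ?thesis using f_repr[OF i] f_repr[OF i'] by (auto simp: abs_le_iff)
qed

end

lemma osc_solve:
  fixes ox ow \<rho> E :: real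
  assumes "0 < \<rho>" "\<rho> \<le> 1/2" "0 \<le> ox" "0 \<le> ow"
    "ox \<le> (1 - \<rho>) * ow + 2 * E" "ow \<le> (1 - \<rho>) * ox + 2 * E"
  shows "ox \<le> 2 * E / \<rho>"
proof -
  have "(1 - \<rho>) * ow \<le> (1 - \<rho>) * ((1 - \<rho>) * ox + 2 * E)" using assms by (intro mult_left_mono) auto
  then have "ox \<le> (1 - \<rho>) * ((1 - \<rho>) * ox + 2 * E) + 2 * E" using assms(5) by linarith
  then have "\<rho> * (2 - \<rho>) * ox \<le> 2 * E * (2 - \<rho>)" by (simp add: algebra_simps power2_eq_square)
  then have "(\<rho> * ox) * (2 - \<rho>) \<le> (2 * E) * (2 - \<rho>)" by (simp add: algebra_simps)
  then have "\<rho> * ox \<le> 2 * E" using assms(2) by (simp add: mult_le_cancel_right_pos)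
  then show ?thesis using assms(1) by (simp add: field_simps)
qed


lemma aux45: "1 \<le> (a::real) \<Longrightarrow> 0 \<le> b \<Longrightarrow> 4*a*b + b \<le> 5*a*b"
proof -
  assume "1 \<le> a" "0 \<le> b"
  then have "1 * b \<le> a * b" by (intro mult_right_mono)
  moreover have "5*a*b = 4*a*b + a*b" by simp
  ultimately show ?thesis by linarith
qed

lemma maxprin:
  fixes n :: nat and u :: "nat \<Rightarrow> nat \<Rightarrow> real" and x w :: "nat \<Rightarrow> real" and m M \<epsilon> :: real
  assumes n3: "n \<ge> 3" and mpos: "m > 0" and mM: "m \<le> M"
    and ub: "\<And>i k. i < n \<Longrightarrow> k < n \<Longrightarrow> i \<noteq> k \<Longrightarrow> m \<le> u i k \<and> u i k \<le> M"
    and w0: "w (n - 1) = 0"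
    and E1: "\<And>i. i < n \<Longrightarrow> \<bar>\<Sum>k\<in>{k. k < n \<and> k \<noteq> i}. u i k * (x i - w k)\<bar> \<le> \<epsilon>"
    and E2: "\<And>j. j < n \<Longrightarrow> \<bar>\<Sum>k\<in>{k. k < n \<and> k \<noteq> j}. u k j * (w j - x k)\<bar> \<le> \<epsilon>"
  shows "\<And>i. i < n \<Longrightarrow> \<bar>x i\<bar> \<le> 5 * (M / m) * (\<epsilon> / ((real n - 1) * m)) \<and> \<bar>w i\<bar> \<le> 5 * (M / m) * (\<epsilon> / ((real n - 1) * m))"
proof -
  interpret s1: side n u m M \<epsilon> x w using assms by unfold_locales auto
  interpret s2: side n "\<lambda>j k. u k j" m M \<epsilon> w x using assms by unfold_locales auto
  let ?E = "\<epsilon> / ((real n - 1) * m)"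
  let ?\<rho> = "m / (2 * M)"
  have E1': "s1.E = ?E" "s2.E = ?E" unfolding s1.E_def s2.E_def by auto
  have E0: "0 \<le> ?E" using s1.E_nonneg E1' by simp
  have Mpos: "0 < M" using mpos mM by linarith
  have rho: "0 < ?\<rho>" "?\<rho> \<le> 1/2" using mpos Mpos mM by (auto simp: field_simps)
  have z: "0 \<in> {..<n}" using n3 by simp
  have fin: "finite ({..<n})" "{..<n} \<noteq> {}" using z by auto
  have "Max (x ` {..<n}) \<in> x ` {..<n}" using fin by (intro Max_in) auto
  then obtain i1 where i1: "i1 < n" "x i1 = s2.gmax"
    unfolding s2.gmax_def by auto
  have "Min (x ` {..<n}) \<in> x ` {..<n}" using fin by (intro Min_in) auto
  then obtain i2 where i2: "i2 < n" "x i2 = s2.gmin"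
    unfolding s2.gmin_def by auto
  have "Max (w ` {..<n}) \<in> w ` {..<n}" using fin by (intro Max_in) auto
  then obtain j1 where j1: "j1 < n" "w j1 = s1.gmax"
    unfolding s1.gmax_def by auto
  have "Min (w ` {..<n}) \<in> w ` {..<n}" using fin by (intro Min_in) auto
  then obtain j2 where j2: "j2 < n" "w j2 = s1.gmin"
    unfolding s1.gmin_def by auto
  have ox: "s2.gmax - s2.gmin \<le> (1 - ?\<rho>) * (s1.gmax - s1.gmin) + 2 * ?E"
    using s1.osc[OF i1(1) i2(1)] i1 i2 E1' by simp
  have ow: "s1.gmax - s1.gmin \<le> (1 - ?\<rho>) * (s2.gmax - s2.gmin) + 2 * ?E"
    using s2.osc[OF j1(1) j2(1)] j1 j2 E1' by simp
  have ox0: "0 \<le> s2.gmax - s2.gmin" using s2.g_range[of 0] n3 by auto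
  have ow0: "0 \<le> s1.gmax - s1.gmin" using s1.g_range[of 0] n3 by auto
  have oxb: "s2.gmax - s2.gmin \<le> 2 * ?E / ?\<rho>" by (rule osc_solve[OF rho ox0 ow0 ox ow])
  have owb: "s1.gmax - s1.gmin \<le> 2 * ?E / ?\<rho>" by (rule osc_solve[OF rho ow0 ox0 ow ox])
  have e: "2 * ?E / ?\<rho> = 4 * (M / m) * ?E" using mpos Mpos by (simp add: field_simps)
  have Mm: "1 \<le> M / m" using mpos mM by simp
  have bnd: "4 * (M / m) * ?E + ?E \<le> 5 * (M / m) * ?E"
    using aux45[OF Mm E0] .
  fix i assume i: "i < n"
  have n1: "n - 1 < n" using n3 by auto
  have wr: "s1.gmin \<le> 0" "0 \<le> s1.gmax" using s1.g_range[OF n1] w0 by auto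
  have xr: "s2.gmin - ?E \<le> 0" "0 \<le> s2.gmax + ?E" using s2.f_range[OF n1] w0 E1' by auto
  have "\<bar>w i\<bar> \<le> s1.gmax - s1.gmin" using s1.g_range[OF i] wr by auto
  then have A: "\<bar>w i\<bar> \<le> 4 * (M / m) * ?E" using owb e by linarith
  have "\<bar>x i\<bar> \<le> (s2.gmax - s2.gmin) + ?E" using s2.g_range[OF i] xr by auto
  then have B: "\<bar>x i\<bar> \<le> 4 * (M / m) * ?E + ?E" using oxb e by linarith
  show "\<bar>x i\<bar> \<le> 5 * (M / m) * ?E \<and> \<bar>w i\<bar> \<le> 5 * (M / m) * ?E"
    using A B bnd E0 by linarith
qed




definition wv :: "nat \<Rightarrow> real vec \<Rightarrow> nat \<Rightarrow> real" where
  "wv n z k = (if k < n - 1 then - z $ (n + k) else 0)"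

lemma Jz_entry:
  assumes n: "n \<ge> 2" and d: "dim_vec \<theta> = 2 * n - 1" and i: "i < 2 * n - 1" and dz: "dim_vec z = 2 * n - 1"
  shows "(Jac n A \<theta> *\<^sub>v z) $ i = (\<Sum>j<2*n-1. jent n \<theta> i j * z $ j)"
proof -
  have "(Jac n A \<theta> *\<^sub>v z) $ i = (\<Sum>j\<in>{0..<dim_vec z}. row (Jac n A \<theta>) i $ j * z $ j)"
    using i by (simp add: scalar_prod_def)
  also have "\<dots> = (\<Sum>j<2*n-1. jent n \<theta> i j * z $ j)"
    using i dz Jac_entry[OF n d i] by (auto simp: lessThan_atLeast0 intro!: sum.cong)
  finally show ?thesis .
qed

lemma sum_last: "n \<ge> 1 \<Longrightarrow> (\<Sum>k<n. f k) = (\<Sum>k<n-1. f k) + f (n - 1 :: nat)"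
  by (cases n) auto

lemma Jz_row1:
  assumes n: "n \<ge> 2" and d: "dim_vec \<theta> = 2 * n - 1" and i: "i < n" and dz: "dim_vec z = 2 * n - 1"
  shows "(Jac n A \<theta> *\<^sub>v z) $ i = - (\<Sum>k\<in>{k. k < n \<and> k \<noteq> i}. uu n \<theta> i k * (z $ i - wv n z k))"
proof -
  have i': "i < 2 * n - 1" using i n by auto
  have "(Jac n A \<theta> *\<^sub>v z) $ i = (\<Sum>j<2*n-1. if j = i then (- (\<Sum>k\<in>{k. k < n \<and> k \<noteq> i}. uu n \<theta> i k)) * z $ i
      else if n \<le> j \<and> j - n \<noteq> i then (\<lambda>k. - uu n \<theta> i k * z $ (n + k)) (j - n) else 0)"
    unfolding Jz_entry[OF n d i' dz] jent_def using i by (intro sum.cong) auto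
  also have "\<dots> = (- (\<Sum>k\<in>{k. k < n \<and> k \<noteq> i}. uu n \<theta> i k)) * z $ i + (\<Sum>k\<in>{k. k < n - 1 \<and> k \<noteq> i}. - uu n \<theta> i k * z $ (n + k))"
    by (rule split1[OF i])
  also have "\<dots> = - (\<Sum>k\<in>{k. k < n \<and> k \<noteq> i}. uu n \<theta> i k * (z $ i - wv n z k))"
  proof -
    have "(\<Sum>k\<in>{k. k < n \<and> k \<noteq> i}. uu n \<theta> i k * (z $ i - wv n z k)) =
       (\<Sum>k\<in>{k. k < n \<and> k \<noteq> i}. uu n \<theta> i k) * z $ i - (\<Sum>k\<in>{k. k < n \<and> k \<noteq> i}. uu n \<theta> i k * wv n z k)"
      unfolding right_diff_distrib sum_subtractf sum_distrib_right by simp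
    moreover have "(\<Sum>k\<in>{k. k < n \<and> k \<noteq> i}. uu n \<theta> i k * wv n z k) = (\<Sum>k\<in>{k. k < n - 1 \<and> k \<noteq> i}. - uu n \<theta> i k * z $ (n + k))"
    proof -
      have "(\<Sum>k\<in>{k. k < n \<and> k \<noteq> i}. uu n \<theta> i k * wv n z k) = (\<Sum>k<n. if k \<noteq> i then uu n \<theta> i k * wv n z k else 0)"
        by (rule sum_filter_ne)
      also have "\<dots> = (\<Sum>k<n-1. if k \<noteq> i then uu n \<theta> i k * wv n z k else 0)"
        using n by (subst sum_last) (auto simp: wv_def)
      also have "\<dots> = (\<Sum>k<n-1. if k \<noteq> i then - uu n \<theta> i k * z $ (n + k) else 0)"
        by (intro sum.cong) (auto simp: wv_def)
      also have "\<dots> = (\<Sum>k\<in>{k. k < n - 1 \<and> k \<noteq> i}. - uu n \<theta> i k * z $ (n + k))"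
        by (rule sum_filter_ne[symmetric])
      finally show ?thesis .
    qed
    ultimately show ?thesis by simp
  qed
  finally show ?thesis .
qed

lemma Jz_row2:
  assumes n: "n \<ge> 2" and d: "dim_vec \<theta> = 2 * n - 1" and j: "j < n - 1" and dz: "dim_vec z = 2 * n - 1"
  shows "(Jac n A \<theta> *\<^sub>v z) $ (n + j) = (\<Sum>k\<in>{k. k < n \<and> k \<noteq> j}. uu n \<theta> k j * (wv n z j - z $ k))"
proof -
  have i': "n + j < 2 * n - 1" using j n by auto
  have "(Jac n A \<theta> *\<^sub>v z) $ (n + j) = (\<Sum>l<2*n-1. if l = n + j then (- (\<Sum>k\<in>{k. k < n \<and> k \<noteq> j}. uu n \<theta> k j)) * z $ (n + j)
      else if l < n \<and> l \<noteq> n + j - n then (\<lambda>k. - uu n \<theta> k j * z $ k) l else 0)"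
    unfolding Jz_entry[OF n d i' dz] jent_def by (intro sum.cong) auto
  also have "\<dots> = (- (\<Sum>k\<in>{k. k < n \<and> k \<noteq> j}. uu n \<theta> k j)) * z $ (n + j) + (\<Sum>k\<in>{k. k < n \<and> k \<noteq> n + j - n}. - uu n \<theta> k j * z $ k)"
    using i' by (intro split2) auto
  also have "\<dots> = (\<Sum>k\<in>{k. k < n \<and> k \<noteq> j}. uu n \<theta> k j * (wv n z j - z $ k))"
  proof -
    have w: "wv n z j = - z $ (n + j)" using j by (simp add: wv_def)
    have "(\<Sum>k\<in>{k. k < n \<and> k \<noteq> j}. uu n \<theta> k j * (wv n z j - z $ k)) =
      (\<Sum>k\<in>{k. k < n \<and> k \<noteq> j}. uu n \<theta> k j) * wv n z j - (\<Sum>k\<in>{k. k < n \<and> k \<noteq> j}. uu n \<theta> k j * z $ k)"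
      unfolding right_diff_distrib sum_subtractf sum_distrib_right by simp
    moreover have "(\<Sum>k\<in>{k. k < n \<and> k \<noteq> n + j - n}. - uu n \<theta> k j * z $ k) = - (\<Sum>k\<in>{k. k < n \<and> k \<noteq> j}. uu n \<theta> k j * z $ k)"
      by (simp add: sum_negf)
    ultimately show ?thesis unfolding w by simp
  qed
  finally show ?thesis .
qed




lemma telescope:
  fixes u :: "nat \<Rightarrow> nat \<Rightarrow> real" and x w :: "nat \<Rightarrow> real" and n :: nat
  shows "(\<Sum>j<n. \<Sum>k\<in>{k. k < n \<and> k \<noteq> j}. u k j * (w j - x k)) = - (\<Sum>i<n. \<Sum>k\<in>{k. k < n \<and> k \<noteq> i}. u i k * (x i - w k))"
proof -
  have "(\<Sum>j<n. \<Sum>k\<in>{k. k < n \<and> k \<noteq> j}. u k j * (w j - x k)) = (\<Sum>j<n. \<Sum>k<n. if k \<noteq> j then u k j * (w j - x k) else 0)"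
    by (simp add: sum_filter_ne)
  also have "\<dots> = (\<Sum>k<n. \<Sum>j<n. if k \<noteq> j then u k j * (w j - x k) else 0)" by (rule sum.swap)
  also have "\<dots> = (\<Sum>k<n. - (\<Sum>j<n. if j \<noteq> k then u k j * (x k - w j) else 0))"
    by (intro sum.cong refl) (auto simp: sum_negf[symmetric] algebra_simps intro!: sum.cong)
  also have "\<dots> = - (\<Sum>i<n. \<Sum>k\<in>{k. k < n \<and> k \<noteq> i}. u i k * (x i - w k))"
    by (simp add: sum_filter_ne sum_negf)
  finally show ?thesis .
qed

lemma last_eq:
  assumes n: "n \<ge> 2" and d: "dim_vec \<theta> = 2 * n - 1" and dz: "dim_vec z = 2 * n - 1"
  shows "(\<Sum>k\<in>{k. k < n \<and> k \<noteq> n - 1}. uu n \<theta> k (n - 1) * (wv n z (n - 1) - z $ k)) =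
     (\<Sum>i<n. (Jac n A \<theta> *\<^sub>v z) $ i) - (\<Sum>j<n-1. (Jac n A \<theta> *\<^sub>v z) $ (n + j))"
proof -
  let ?E2 = "\<lambda>j. (\<Sum>k\<in>{k. k < n \<and> k \<noteq> j}. uu n \<theta> k j * (wv n z j - z $ k))"
  let ?E1 = "\<lambda>i. (\<Sum>k\<in>{k. k < n \<and> k \<noteq> i}. uu n \<theta> i k * (z $ i - wv n z k))"
  have t: "(\<Sum>j<n. ?E2 j) = - (\<Sum>i<n. ?E1 i)"
    by (rule telescope[of "uu n \<theta>" "wv n z" "\<lambda>k. z $ k" n])
  have a: "(\<Sum>i<n. (Jac n A \<theta> *\<^sub>v z) $ i) = - (\<Sum>i<n. ?E1 i)"
    using Jz_row1[OF n d _ dz] by (simp add: sum_negf)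
  have b: "(\<Sum>j<n-1. (Jac n A \<theta> *\<^sub>v z) $ (n + j)) = (\<Sum>j<n-1. ?E2 j)"
    using Jz_row2[OF n d _ dz] by simp
  have c: "(\<Sum>j<n. ?E2 j) = (\<Sum>j<n-1. ?E2 j) + ?E2 (n - 1)"
    using n by (intro sum_last) auto
  show ?thesis using t a b c by linarith
qed

lemma card_as_sum: "real (card {j. j < n \<and> P j}) = (\<Sum>j<(n::nat). if P j then 1 else 0)"
proof -
  have "{j. j < n \<and> P j} = {..<n} \<inter> {j. P j}" by auto
  then show ?thesis using sum.inter_restrict[of "{..<n}" "\<lambda>_. 1::real" "{j. P j}"] by simp
qed

lemma deg_identity:
  assumes n: "n \<ge> 2"
  shows "(\<Sum>i<n. Fcomp n A \<theta> i) - (\<Sum>j<n-1. Fcomp n A \<theta> (n + j)) = indeg n A (n - 1) - Eindeg n \<theta> (n - 1)"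
proof -
  have o: "(\<Sum>i<n. outdeg n A i) = (\<Sum>j<n. indeg n A j)"
  proof -
    have "(\<Sum>i<n. outdeg n A i) = (\<Sum>i<n. \<Sum>j<n. if j \<noteq> i \<and> A i j then 1 else 0)"
      unfolding outdeg_def by (subst card_as_sum) (auto intro!: sum.cong)
    also have "\<dots> = (\<Sum>j<n. \<Sum>i<n. if j \<noteq> i \<and> A i j then 1 else 0)" by (rule sum.swap)
    also have "\<dots> = (\<Sum>j<n. indeg n A j)"
      unfolding indeg_def by (subst card_as_sum) (auto intro!: sum.cong)
    finally show ?thesis .
  qed
  have e: "(\<Sum>i<n. Eoutdeg n \<theta> i) = (\<Sum>j<n. Eindeg n \<theta> j)"
  proof -
    have "(\<Sum>i<n. Eoutdeg n \<theta> i) = (\<Sum>i<n. \<Sum>k<n. if k \<noteq> i then logistic (alpha \<theta> i + beta n \<theta> k) else 0)"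
      unfolding Eoutdeg_def by (simp add: sum_filter_ne)
    also have "\<dots> = (\<Sum>k<n. \<Sum>i<n. if k \<noteq> i then logistic (alpha \<theta> i + beta n \<theta> k) else 0)" by (rule sum.swap)
    also have "\<dots> = (\<Sum>j<n. Eindeg n \<theta> j)"
      unfolding Eindeg_def by (simp add: sum_filter_ne) (auto intro!: sum.cong)
    finally show ?thesis .
  qed
  have F1: "(\<Sum>i<n. Fcomp n A \<theta> i) = (\<Sum>i<n. outdeg n A i) - (\<Sum>i<n. Eoutdeg n \<theta> i)"
    unfolding Fcomp_def Eoutdeg_def by (simp add: sum_subtractf)
  have F2: "(\<Sum>j<n-1. Fcomp n A \<theta> (n + j)) = (\<Sum>j<n-1. indeg n A j) - (\<Sum>j<n-1. Eindeg n \<theta> j)"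
    unfolding Fcomp_def Eindeg_def by (simp add: sum_subtractf)
  have l1: "(\<Sum>j<n. indeg n A j) = (\<Sum>j<n-1. indeg n A j) + indeg n A (n - 1)" using n by (intro sum_last) auto
  have l2: "(\<Sum>j<n. Eindeg n \<theta> j) = (\<Sum>j<n-1. Eindeg n \<theta> j) + Eindeg n \<theta> (n - 1)" using n by (intro sum_last) auto
  show ?thesis using o e F1 F2 l1 l2 by linarith
qed




lemma uu_bounds:
  assumes d: "dim_vec \<theta> = 2 * n - 1" and i: "i < n" and n: "n \<ge> 2"
  shows "exp (- 2 * linf \<theta>) / 4 \<le> uu n \<theta> i k \<and> uu n \<theta> i k \<le> 1 / 4"
proof -
  let ?T = "linf \<theta>"
  have a: "\<bar>alpha \<theta> i\<bar> \<le> ?T" unfolding alpha_def using linf_ge[of i \<theta>] d i n by auto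
  have b: "\<bar>beta n \<theta> k\<bar> \<le> ?T" unfolding beta_def using linf_ge[of "n + k" \<theta>] d linf_nonneg[of \<theta>] by auto
  have "\<bar>alpha \<theta> i + beta n \<theta> k\<bar> \<le> 2 * ?T" using a b by linarith
  then have e: "exp (- 2 * ?T) / 4 \<le> exp (- \<bar>alpha \<theta> i + beta n \<theta> k\<bar>) / 4" by simp
  show ?thesis unfolding uu_def
    by (rule conjI, rule order_trans[OF e lp_lower], rule lp_le)
qed

lemma bound_lemma:
  assumes n: "n \<ge> 3" and d: "dim_vec \<theta> = 2 * n - 1" and dz: "dim_vec z = 2 * n - 1"
    and h: "\<And>i. i < 2 * n - 1 \<Longrightarrow> \<bar>(Jac n A \<theta> *\<^sub>v z) $ i\<bar> \<le> \<epsilon>"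
    and hl: "\<bar>(\<Sum>i<n. (Jac n A \<theta> *\<^sub>v z) $ i) - (\<Sum>j<n-1. (Jac n A \<theta> *\<^sub>v z) $ (n + j))\<bar> \<le> \<epsilon>"
  shows "\<And>i. i < 2 * n - 1 \<Longrightarrow> \<bar>z $ i\<bar> \<le> 20 * exp (4 * linf \<theta>) * (\<epsilon> / (real n - 1))"
proof -
  let ?T = "linf \<theta>"
  let ?m = "exp (- 2 * ?T) / 4"
  let ?M = "1/4 :: real"
  have n2: "n \<ge> 2" using n by auto
  have mpos: "?m > 0" by simp
  have mM: "?m \<le> ?M" using linf_nonneg[of \<theta>] by simp
  have ub: "\<And>i k. i < n \<Longrightarrow> k < n \<Longrightarrow> i \<noteq> k \<Longrightarrow> ?m \<le> uu n \<theta> i k \<and> uu n \<theta> i k \<le> ?M"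
    using uu_bounds[OF d _ n2] by blast
  have w0: "wv n z (n - 1) = 0" unfolding wv_def by simp
  have E1: "\<And>i. i < n \<Longrightarrow> \<bar>\<Sum>k\<in>{k. k < n \<and> k \<noteq> i}. uu n \<theta> i k * (z $ i - wv n z k)\<bar> \<le> \<epsilon>"
  proof -
    fix i assume i: "i < n"
    show "\<bar>\<Sum>k\<in>{k. k < n \<and> k \<noteq> i}. uu n \<theta> i k * (z $ i - wv n z k)\<bar> \<le> \<epsilon>"
      using h[of i] Jz_row1[OF n2 d i dz, of A] i n by simp
  qed
  have E2: "\<And>j. j < n \<Longrightarrow> \<bar>\<Sum>k\<in>{k. k < n \<and> k \<noteq> j}. uu n \<theta> k j * (wv n z j - z $ k)\<bar> \<le> \<epsilon>"
  proof -
    fix j assume j: "j < n"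
    show "\<bar>\<Sum>k\<in>{k. k < n \<and> k \<noteq> j}. uu n \<theta> k j * (wv n z j - z $ k)\<bar> \<le> \<epsilon>"
    proof (cases "j < n - 1")
      case True
      then show ?thesis using h[of "n + j"] Jz_row2[OF n2 d True dz, of A] by simp
    next
      case False
      then have "j = n - 1" using j by auto
      then show ?thesis using last_eq[OF n2 d dz, of A] hl by simp
    qed
  qed
  have mp: "\<And>i. i < n \<Longrightarrow> \<bar>z $ i\<bar> \<le> 5 * (?M / ?m) * (\<epsilon> / ((real n - 1) * ?m)) \<and> \<bar>wv n z i\<bar> \<le> 5 * (?M / ?m) * (\<epsilon> / ((real n - 1) * ?m))"
    by (rule maxprin[where u="uu n \<theta>" and x="\<lambda>k. z $ k" and w="wv n z"]) (use n mpos mM ub w0 E1 E2 in auto)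
  have B: "5 * (?M / ?m) * (\<epsilon> / ((real n - 1) * ?m)) = 20 * exp (4 * ?T) * (\<epsilon> / (real n - 1))"
  proof -
    have e1: "exp (- 2 * ?T) = 1 / exp (2 * ?T)" using exp_minus[of "2 * ?T"] by (simp add: divide_inverse)
    have e2: "exp (4 * ?T) = exp (2 * ?T) * exp (2 * ?T)" by (simp add: exp_add[symmetric])
    have pos: "exp (2 * ?T) > 0" "real n - 1 > 0" using n by auto
    show ?thesis unfolding e1 e2 using pos by (simp add: field_simps)
  qed
  fix i assume i: "i < 2 * n - 1"
  show "\<bar>z $ i\<bar> \<le> 20 * exp (4 * linf \<theta>) * (\<epsilon> / (real n - 1))"
  proof (cases "i < n")
    case True
    then show ?thesis using mp[OF True] B by simp
  next
    case False
    then have j: "i - n < n" and j1: "i - n < n - 1" using i by auto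
    have "\<bar>z $ i\<bar> = \<bar>wv n z (i - n)\<bar>" unfolding wv_def using j1 False by simp
    then show ?thesis using mp[OF j] B by simp
  qed
qed




lemma sqrt_bound:
  assumes n: "n \<ge> (3::nat)"
  shows "sqrt ((real n - 1) * ln (real n - 1)) / (real n - 1) \<le> 3/2 * (sqrt (ln (real n)) / sqrt (real n))"
proof -
  have n1: "real n - 1 > 0" "real n - 1 \<ge> 2" using n by auto
  have "sqrt ((real n - 1) * ln (real n - 1)) / (real n - 1) = sqrt ((real n - 1) * ln (real n - 1)) / sqrt ((real n - 1)^2)"
    using n1 by simp
  also have "\<dots> = sqrt (ln (real n - 1) / (real n - 1))"
    unfolding real_sqrt_divide[symmetric] using n1 by (simp add: power2_eq_square)
  also have "\<dots> \<le> sqrt (2 * (ln (real n) / real n))"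
  proof (rule real_sqrt_le_mono)
    have l0: "0 \<le> ln (real n - 1)" using n1 by simp
    have l1: "ln (real n - 1) \<le> ln (real n)" using n1 by simp
    have "ln (real n - 1) / (real n - 1) \<le> ln (real n) / (real n - 1)"
      using l1 n1 by (intro divide_right_mono) auto
    also have "\<dots> \<le> ln (real n) / (real n / 2)"
      using l0 l1 n1 by (intro divide_left_mono) auto
    finally have X: "ln (real n - 1) / (real n - 1) \<le> ln (real n) / (real n / 2)" .
    have E: "ln (real n) / (real n / 2) = 2 * (ln (real n) / real n)" by simp
    show "ln (real n - 1) / (real n - 1) \<le> 2 * (ln (real n) / real n)" using X unfolding E .
  qed
  also have "\<dots> = sqrt 2 * (sqrt (ln (real n)) / sqrt (real n))"
    by (simp add: real_sqrt_mult real_sqrt_divide)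
  also have "\<dots> \<le> 3/2 * (sqrt (ln (real n)) / sqrt (real n))"
  proof (rule mult_right_mono)
    have "sqrt 2 \<le> sqrt ((3/2)^2)" by (rule real_sqrt_le_mono) (simp add: power2_eq_square)
    then show "sqrt 2 \<le> 3/2" by simp
    show "0 \<le> sqrt (ln (real n)) / sqrt (real n)" using n by simp
  qed
  finally show ?thesis .
qed

lemma part_b:
  assumes n: "n \<ge> 3" and d: "dim_vec \<theta> = 2 * n - 1"
    and cond: "max (Max {\<bar>outdeg n A i - Eoutdeg n \<theta> i\<bar> | i. i < n})
                 (Max {\<bar>indeg n A j - Eindeg n \<theta> j\<bar> | j. j < n})
               \<le> sqrt ((real n - 1) * ln (real n - 1))"
  shows "invertible_mat (Jac n A \<theta>) \<and>
             (\<forall>B \<in> carrier_mat (2 * n - 1) (2 * n - 1). inverts_mat B (Jac n A \<theta>) \<longrightarrow>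
                linf (B *\<^sub>v Fvec n A \<theta>)
                  \<le> sqrt (ln (real n)) / sqrt (real n) *
                      (30 * exp (6 * linf \<theta>) + 1 * exp (2 * linf \<theta>)))"
proof
  let ?N = "2 * n - 1"
  let ?J = "Jac n A \<theta>"
  let ?\<epsilon> = "sqrt ((real n - 1) * ln (real n - 1))"
  let ?T = "linf \<theta>"
  have n2: "n \<ge> 2" using n by auto
  have Jc: "?J \<in> carrier_mat ?N ?N" by (rule Jac_dim)
  have od: "\<And>i. i < n \<Longrightarrow> \<bar>outdeg n A i - Eoutdeg n \<theta> i\<bar> \<le> ?\<epsilon>"
  proof -
    fix i assume i: "i < n"
    have "\<bar>outdeg n A i - Eoutdeg n \<theta> i\<bar> \<le> Max {\<bar>outdeg n A i - Eoutdeg n \<theta> i\<bar> | i. i < n}"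
      using i by (intro Max_ge) auto
    then show "\<bar>outdeg n A i - Eoutdeg n \<theta> i\<bar> \<le> ?\<epsilon>" using cond by linarith
  qed
  have idg: "\<And>j. j < n \<Longrightarrow> \<bar>indeg n A j - Eindeg n \<theta> j\<bar> \<le> ?\<epsilon>"
  proof -
    fix j assume j: "j < n"
    have "\<bar>indeg n A j - Eindeg n \<theta> j\<bar> \<le> Max {\<bar>indeg n A j - Eindeg n \<theta> j\<bar> | j. j < n}"
      using j by (intro Max_ge) auto
    then show "\<bar>indeg n A j - Eindeg n \<theta> j\<bar> \<le> ?\<epsilon>" using cond by linarith
  qed
  have Fd: "dim_vec (Fvec n A \<theta>) = ?N" unfolding Fvec_def by simp
  have Fi: "\<And>i. i < ?N \<Longrightarrow> Fvec n A \<theta> $ i = Fcomp n A \<theta> i" unfolding Fvec_def by simp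
  have Fb: "\<And>i. i < ?N \<Longrightarrow> \<bar>Fvec n A \<theta> $ i\<bar> \<le> ?\<epsilon>"
  proof -
    fix i assume i: "i < ?N"
    show "\<bar>Fvec n A \<theta> $ i\<bar> \<le> ?\<epsilon>"
    proof (cases "i < n")
      case True
      then show ?thesis using od[OF True] Fi[OF i] unfolding Fcomp_def Eoutdeg_def by simp
    next
      case False
      then have "i - n < n" using i by auto
      then show ?thesis using idg[of "i - n"] Fi[OF i] False unfolding Fcomp_def Eindeg_def by simp
    qed
  qed
  have Fl: "\<bar>(\<Sum>i<n. Fvec n A \<theta> $ i) - (\<Sum>j<n-1. Fvec n A \<theta> $ (n + j))\<bar> \<le> ?\<epsilon>"
  proof -
    have "(\<Sum>i<n. Fvec n A \<theta> $ i) = (\<Sum>i<n. Fcomp n A \<theta> i)" using Fi n by (intro sum.cong) auto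
    moreover have "(\<Sum>j<n-1. Fvec n A \<theta> $ (n + j)) = (\<Sum>j<n-1. Fcomp n A \<theta> (n + j))" using Fi n by (intro sum.cong) auto
    ultimately show ?thesis using deg_identity[OF n2, of A \<theta>] idg[of "n - 1"] n by simp
  qed
  have "det ?J \<noteq> 0"
  proof
    assume "det ?J = 0"
    then obtain v where v: "v \<in> carrier_vec ?N" "v \<noteq> 0\<^sub>v ?N" "?J *\<^sub>v v = 0\<^sub>v ?N"
      using det_0_iff_vec_prod_zero[OF Jc] by auto
    have dv: "dim_vec v = ?N" using v by auto
    have "\<And>i. i < ?N \<Longrightarrow> \<bar>v $ i\<bar> \<le> 20 * exp (4 * ?T) * (0 / (real n - 1))"
      by (rule bound_lemma[OF n d dv, of A 0]) (auto simp: v(3))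
    then have "v = 0\<^sub>v ?N" using dv by (intro eq_vecI) auto
    then show False using v by simp
  qed
  then have "?J \<in> Units (ring_mat TYPE(real) ?N ())" by (rule det_non_zero_imp_unit[OF Jc])
  then obtain B where B: "B \<in> carrier_mat ?N ?N" "?J * B = 1\<^sub>m ?N" "B * ?J = 1\<^sub>m ?N"
    unfolding Units_def ring_mat_def by auto
  have sq: "square_mat ?J" by simp
  have e1: "?J * B = 1\<^sub>m (dim_row ?J)" using B(2) by simp
  have e2: "B * ?J = 1\<^sub>m (dim_row B)" using B(3) carrier_matD(1)[OF B(1)] by simp
  show "invertible_mat ?J"
    unfolding invertible_mat_def inverts_mat_def using sq e1 e2 by blast
  show "\<forall>B \<in> carrier_mat ?N ?N. inverts_mat B ?J \<longrightarrow>
                linf (B *\<^sub>v Fvec n A \<theta>)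
                  \<le> sqrt (ln (real n)) / sqrt (real n) * (30 * exp (6 * ?T) + 1 * exp (2 * ?T))"
  proof (intro ballI impI)
    fix C assume Bc: "C \<in> carrier_mat ?N ?N" and inv: "inverts_mat C ?J"
    have rB: "dim_row C = ?N" by (rule carrier_matD(1)[OF Bc])
    have BJ: "C * ?J = 1\<^sub>m ?N" using inv unfolding inverts_mat_def rB .
    have JB: "?J * C = 1\<^sub>m ?N" by (rule mat_mult_left_right_inverse[OF Bc Jc BJ])
    let ?z = "C *\<^sub>v Fvec n A \<theta>"
    have Fc: "Fvec n A \<theta> \<in> carrier_vec ?N" using Fd by (rule carrier_vecI)
    have dz: "dim_vec ?z = ?N" using rB by simp
    have "?J *\<^sub>v ?z = (?J * C) *\<^sub>v Fvec n A \<theta>" by (rule assoc_mult_mat_vec[OF Jc Bc Fc, symmetric])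
    also have "\<dots> = 1\<^sub>m ?N *\<^sub>v Fvec n A \<theta>" by (simp only: JB)
    also have "\<dots> = Fvec n A \<theta>" by (rule one_mult_mat_vec[OF Fc])
    finally have Jz: "?J *\<^sub>v ?z = Fvec n A \<theta>" .
    have zb: "\<And>i. i < ?N \<Longrightarrow> \<bar>?z $ i\<bar> \<le> 20 * exp (4 * ?T) * (?\<epsilon> / (real n - 1))"
      by (rule bound_lemma[OF n d dz, of A ?\<epsilon>]) (use Jz Fb Fl in auto)
    have s: "?\<epsilon> / (real n - 1) \<le> 3/2 * (sqrt (ln (real n)) / sqrt (real n))" by (rule sqrt_bound[OF n])
    let ?s = "sqrt (ln (real n)) / sqrt (real n)"
    have s0: "0 \<le> ?s" using n by simp
    have T0: "0 \<le> ?T" by (rule linf_nonneg)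
    have "20 * exp (4 * ?T) * (?\<epsilon> / (real n - 1)) \<le> 20 * exp (4 * ?T) * (3/2 * ?s)"
      using s by (intro mult_left_mono) auto
    also have "\<dots> = ?s * (30 * exp (4 * ?T))" by simp
    also have "\<dots> \<le> ?s * (30 * exp (6 * ?T) + 1 * exp (2 * ?T))"
      using s0 T0 by (intro mult_left_mono) (auto simp: add_increasing2)
    finally have fin: "20 * exp (4 * ?T) * (?\<epsilon> / (real n - 1)) \<le> ?s * (30 * exp (6 * ?T) + 1 * exp (2 * ?T))" .
    have "linf ?z \<le> 20 * exp (4 * ?T) * (?\<epsilon> / (real n - 1))"
    proof (rule linf_le)
      show "0 \<le> 20 * exp (4 * ?T) * (?\<epsilon> / (real n - 1))" using n by simp
      show "\<And>i. i < dim_vec ?z \<Longrightarrow> \<bar>?z $ i\<bar> \<le> 20 * exp (4 * ?T) * (?\<epsilon> / (real n - 1))"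
        using zb dz by auto
    qed
    then show "linf ?z \<le> ?s * (30 * exp (6 * ?T) + 1 * exp (2 * ?T))" using fin by linarith
  qed
qed

theorem lemma2:
  shows "(\<forall>n::nat. \<forall>A x y v. n \<ge> 2 \<longrightarrow>
            dim_vec x = 2 * n - 1 \<longrightarrow> dim_vec y = 2 * n - 1 \<longrightarrow> dim_vec v = 2 * n - 1 \<longrightarrow>
            linf ((Jac n A x - Jac n A y) *\<^sub>v v) \<le> (real n - 1) * linf (x - y) * linf v \<and>
            (\<forall>i < 2 * n - 1. linf (row (Jac n A x) i - row (Jac n A y) i)
                               \<le> (real n - 1) / 2 * linf (x - y)))
     \<and>
     (\<exists>c11 c12 :: real. c11 > 0 \<and> c12 > 0 \<and>
       (\<forall>\<theta>s :: nat \<Rightarrow> real vec.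
          (\<forall>n \<ge> 2. dim_vec (\<theta>s n) = 2 * n - 1) \<longrightarrow>
          ((\<lambda>n. exp (2 * linf (\<theta>s n)) / real n) \<longlonglongrightarrow> 0) \<longrightarrow>
          (\<forall>\<^sub>F n in sequentially. \<forall>A :: nat \<Rightarrow> nat \<Rightarrow> bool.
             max (Max {\<bar>outdeg n A i - Eoutdeg n (\<theta>s n) i\<bar> | i. i < n})
                 (Max {\<bar>indeg n A j - Eindeg n (\<theta>s n) j\<bar> | j. j < n})
               \<le> sqrt ((real n - 1) * ln (real n - 1)) \<longrightarrow>
             invertible_mat (Jac n A (\<theta>s n)) \<and>
             (\<forall>B \<in> carrier_mat (2 * n - 1) (2 * n - 1). inverts_mat B (Jac n A (\<theta>s n)) \<longrightarrow>
                linf (B *\<^sub>v Fvec n A (\<theta>s n))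
                  \<le> sqrt (ln (real n)) / sqrt (real n) *
                      (c11 * exp (6 * linf (\<theta>s n)) + c12 * exp (2 * linf (\<theta>s n)))))))"
  proof (intro conjI)
  show "\<forall>n::nat. \<forall>A x y v. n \<ge> 2 \<longrightarrow>
            dim_vec x = 2 * n - 1 \<longrightarrow> dim_vec y = 2 * n - 1 \<longrightarrow> dim_vec v = 2 * n - 1 \<longrightarrow>
            linf ((Jac n A x - Jac n A y) *\<^sub>v v) \<le> (real n - 1) * linf (x - y) * linf v \<and>
            (\<forall>i < 2 * n - 1. linf (row (Jac n A x) i - row (Jac n A y) i)
                               \<le> (real n - 1) / 2 * linf (x - y))"
    using part_a by blast
next
  show "\<exists>c11 c12 :: real. c11 > 0 \<and> c12 > 0 \<and>
       (\<forall>\<theta>s :: nat \<Rightarrow> real vec.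
          (\<forall>n \<ge> 2. dim_vec (\<theta>s n) = 2 * n - 1) \<longrightarrow>
          ((\<lambda>n. exp (2 * linf (\<theta>s n)) / real n) \<longlonglongrightarrow> 0) \<longrightarrow>
          (\<forall>\<^sub>F n in sequentially. \<forall>A :: nat \<Rightarrow> nat \<Rightarrow> bool.
             max (Max {\<bar>outdeg n A i - Eoutdeg n (\<theta>s n) i\<bar> | i. i < n})
                 (Max {\<bar>indeg n A j - Eindeg n (\<theta>s n) j\<bar> | j. j < n})
               \<le> sqrt ((real n - 1) * ln (real n - 1)) \<longrightarrow>
             invertible_mat (Jac n A (\<theta>s n)) \<and>
             (\<forall>B \<in> carrier_mat (2 * n - 1) (2 * n - 1). inverts_mat B (Jac n A (\<theta>s n)) \<longrightarrow>
                linf (B *\<^sub>v Fvec n A (\<theta>s n))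
                  \<le> sqrt (ln (real n)) / sqrt (real n) *
                      (c11 * exp (6 * linf (\<theta>s n)) + c12 * exp (2 * linf (\<theta>s n))))))"
  proof (rule exI[of _ 30], rule exI[of _ 1], intro conjI allI impI)
    fix \<theta>s :: "nat \<Rightarrow> real vec"
    assume d: "\<forall>n \<ge> 2. dim_vec (\<theta>s n) = 2 * n - 1"
      and "(\<lambda>n. exp (2 * linf (\<theta>s n)) / real n) \<longlonglongrightarrow> 0"
    show "\<forall>\<^sub>F n in sequentially. \<forall>A :: nat \<Rightarrow> nat \<Rightarrow> bool.
             max (Max {\<bar>outdeg n A i - Eoutdeg n (\<theta>s n) i\<bar> | i. i < n})
                 (Max {\<bar>indeg n A j - Eindeg n (\<theta>s n) j\<bar> | j. j < n})
               \<le> sqrt ((real n - 1) * ln (real n - 1)) \<longrightarrow>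
             invertible_mat (Jac n A (\<theta>s n)) \<and>
             (\<forall>B \<in> carrier_mat (2 * n - 1) (2 * n - 1). inverts_mat B (Jac n A (\<theta>s n)) \<longrightarrow>
                linf (B *\<^sub>v Fvec n A (\<theta>s n))
                  \<le> sqrt (ln (real n)) / sqrt (real n) *
                      (30 * exp (6 * linf (\<theta>s n)) + 1 * exp (2 * linf (\<theta>s n))))"
      unfolding eventually_sequentially
      apply (rule exI[of _ "3::nat"])
      apply (intro allI impI)
      apply (rule part_b)
      using d by auto
  qed auto
qed

end
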